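(* Let $n\ge2$, let $(e_1,\dots,e_n)$ be the canonical basis of $\mathbb{R}^n$, let $E_{i,j}$ be the $n\times n$ matrix with $1$ in row $i$, column $j$ and $0$ elsewhere, and let $(E_{i,j}^* )$ be the dual basis of $\mathfrak{gl}(n,\mathbb{R})^*$. Define $\mathfrak{h}=\{A\in\mathfrak{sl}(n,\mathbb{R}):\exists\lambda\in\mathbb{R},\ A e_n=\lambda e_n\}$ and, for $\alpha=1,\dots,n$, the 2-form $\theta_\alpha$ on $\mathfrak{sl}(n,\mathbb{R})$ by $\theta_\alpha(A,B)=-E_{\alpha,n}^*([A,B])$ (the restriction of $dE^*_{\alpha,n}$). Then $(\mathfrak{h},\theta_1,\dots,\theta_n)$ is an $n$-symplectic structure on $\mathfrak{sl}(n,\mathbb{R})$ (here $\dim\mathfrak{sl}(n,\mathbb{R})=(n-1)(n+1)$ and $\dim\mathfrak{h}=n(n-1)$).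
   Context: A $k$-symplectic structure on a real Lie algebra $\mathfrak{g}$ of dimension $m(k+1)$ ($m,k\ge1$) is a pair consisting of a Lie subalgebra $\mathfrak{h}\subset\mathfrak{g}$ of dimension $mk$ and a family $(\theta_1,\dots,\theta_k)$ of skew-symmetric bilinear forms on $\mathfrak{g}$ such that: (i) $\bigcap_{i=1}^k\ker\theta_i=\{0\}$, where $\ker\theta_i=\{u\in\mathfrak{g}:\theta_i(u,v)=0\ \forall v\in\mathfrak{g}\}$; (ii) each $\theta_i$ is a 2-cocycle: $\theta_i([u,v],w)+\theta_i([v,w],u)+\theta_i([w,u],v)=0$ for all $u,v,w$; (iii) $\theta_i(u,v)=0$ for all $u,v\in\mathfrak{h}$ and all $i$. *)

theory Defs
  imports "HOL-Analysis.Analysis"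
begin

definition is_lie_algebra :: "'v::real_vector set \<Rightarrow> ('v \<Rightarrow> 'v \<Rightarrow> 'v) \<Rightarrow> bool" where
  "is_lie_algebra g br \<longleftrightarrow> subspace g
     \<and> (\<forall>u\<in>g. \<forall>v\<in>g. br u v \<in> g)
     \<and> (\<forall>a. \<forall>u\<in>g. \<forall>v\<in>g. \<forall>w\<in>g. br (a *\<^sub>R u + v) w = a *\<^sub>R br u w + br v w)
     \<and> (\<forall>u\<in>g. \<forall>v\<in>g. br u v = - br v u)
     \<and> (\<forall>u\<in>g. \<forall>v\<in>g. \<forall>w\<in>g. br u (br v w) + br v (br w u) + br w (br u v) = 0)"

definition lie_subalgebra :: "'v::real_vector set \<Rightarrow> 'v set \<Rightarrow> ('v \<Rightarrow> 'v \<Rightarrow> 'v) \<Rightarrow> bool" where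
  "lie_subalgebra h g br \<longleftrightarrow> h \<subseteq> g \<and> subspace h \<and> (\<forall>u\<in>h. \<forall>v\<in>h. br u v \<in> h)"

definition skew_bilinear_on :: "'v::real_vector set \<Rightarrow> ('v \<Rightarrow> 'v \<Rightarrow> real) \<Rightarrow> bool" where
  "skew_bilinear_on g t \<longleftrightarrow>
     (\<forall>a. \<forall>u\<in>g. \<forall>v\<in>g. \<forall>w\<in>g. t (a *\<^sub>R u + v) w = a * t u w + t v w)
     \<and> (\<forall>u\<in>g. \<forall>v\<in>g. t u v = - t v u)"

definition form_kernel :: "'v::real_vector set \<Rightarrow> ('v \<Rightarrow> 'v \<Rightarrow> real) \<Rightarrow> 'v set" where
  "form_kernel g t = {u\<in>g. \<forall>v\<in>g. t u v = 0}"

definition is_2cocycle :: "'v::real_vector set \<Rightarrow> ('v \<Rightarrow> 'v \<Rightarrow> 'v) \<Rightarrow> ('v \<Rightarrow> 'v \<Rightarrow> real) \<Rightarrow> bool" where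
  "is_2cocycle g br t \<longleftrightarrow>
     (\<forall>u\<in>g. \<forall>v\<in>g. \<forall>w\<in>g. t (br u v) w + t (br v w) u + t (br w u) v = 0)"

definition k_symplectic :: "'v::real_vector set \<Rightarrow> ('v \<Rightarrow> 'v \<Rightarrow> 'v) \<Rightarrow> nat \<Rightarrow>
    'v set \<Rightarrow> ('i \<Rightarrow> 'v \<Rightarrow> 'v \<Rightarrow> real) \<Rightarrow> 'i set \<Rightarrow> bool" where
  "k_symplectic g br k h \<theta> I \<longleftrightarrow>
     is_lie_algebra g br \<and> finite I \<and> card I = k \<and> k \<ge> 1
     \<and> (\<exists>m::nat. m \<ge> 1 \<and> dim g = m * (k + 1) \<and> dim h = m * k)
     \<and> lie_subalgebra h g br
     \<and> (\<forall>i\<in>I. skew_bilinear_on g (\<theta> i))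
     \<and> (\<Inter>i\<in>I. form_kernel g (\<theta> i)) = {0}
     \<and> (\<forall>i\<in>I. is_2cocycle g br (\<theta> i))
     \<and> (\<forall>i\<in>I. \<forall>u\<in>h. \<forall>v\<in>h. \<theta> i u v = 0)"

text \<open>Matrices in real^'n^'n; the index type 'n is ordered, and its greatest
  element plays the role of the last index n.\<close>
definition sl :: "(real^'n^'n) set" where
  "sl = {A. trace A = 0}"

definition mbr :: "real^'n^'n \<Rightarrow> real^'n^'n \<Rightarrow> real^'n^'n" where
  "mbr A B = A ** B - B ** A"

definition lastidx :: "'n::{finite,linorder}" where
  "lastidx = Max (UNIV :: 'n set)"

definition sl_h :: "((real, 'n::{finite,linorder}) vec, 'n) vec set" where
  "sl_h = {A\<in>sl. \<exists>c::real. A *v axis lastidx 1 = c *\<^sub>R axis lastidx 1}"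

definition sl_theta ::
   "'n::{finite,linorder} \<Rightarrow> ((real, 'n) vec, 'n) vec \<Rightarrow> ((real, 'n) vec, 'n) vec \<Rightarrow> real" where
  "sl_theta \<alpha> A B = - (mbr A B $ \<alpha> $ lastidx)"

end

theory Submission imports Defs begin

definition EE :: "'n::finite \<Rightarrow> 'n \<Rightarrow> real^'n^'n" where
  "EE i j = (\<chi> a b. if a = i \<and> b = j then 1 else 0)"

lemma mbr_lin: "mbr (a *\<^sub>R U + V) W = a *\<^sub>R mbr U W + mbr V W"
  by (simp add: mbr_def vec_eq_iff matrix_matrix_mult_def sum.distrib sum_distrib_left algebra_simps sum_subtractf)

lemma mbr_skew: "mbr U V = - mbr V U"
  by (simp add: mbr_def)

lemma msub_l: "(A::real^'n^'n) ** (B - C) = A ** B - A ** C"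
  by (simp add: vec_eq_iff matrix_matrix_mult_def sum_subtractf algebra_simps)
lemma msub_r: "((B::real^'n^'n) - C) ** A = B ** A - C ** A"
  by (simp add: vec_eq_iff matrix_matrix_mult_def sum_subtractf algebra_simps)

lemma mbr_jacobi: "mbr (u::real^'n^'n) (mbr v w) + mbr v (mbr w u) + mbr w (mbr u v) = 0"
  unfolding mbr_def msub_l msub_r matrix_mul_assoc
  by (simp add: diff_add_eq add_diff_eq diff_diff_eq2 diff_eq_eq eq_diff_eq)

lemma trace_mbr: "trace (mbr (A::real^'n^'n) B) = 0"
  by (simp add: mbr_def trace_sub trace_mul_sym[of A B])

lemma trace_scale: "trace (a *\<^sub>R (A::real^'n^'n)) = a * trace A"
  by (simp add: trace_def sum_distrib_left)

lemma subspace_sl: "subspace (sl :: (real^'n^'n) set)"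
  by (simp add: subspace_def sl_def trace_def sum.distrib sum_distrib_left[symmetric])

lemma col: "(M *v axis n 1)$i = (M::real^'n^'n)$i$n"
  by (simp add: matrix_vector_mult_def axis_def if_distrib cong: if_cong)

lemma mul_EE_r: "((u::real^'n^'n) ** EE i j)$a$b = (if b = j then u$a$i else 0)"
  by (simp add: matrix_matrix_mult_def EE_def if_distrib cong: if_cong)

lemma mul_EE_l: "(EE i j ** (u::real^'n^'n))$a$b = (if a = i then u$j$b else 0)"
  by (simp add: matrix_matrix_mult_def EE_def if_distrib if_distribR cong: if_cong)

lemma trace_EE: "i \<noteq> j \<Longrightarrow> trace (EE i j :: real^'n^'n) = 0"
  by (auto simp: trace_def EE_def intro: sum.neutral)

lemma sl_h_alt: "(sl_h :: ((real, 'a::{finite,linorder}) vec, 'a) vec set) = {A\<in>sl. \<forall>i. i \<noteq> lastidx \<longrightarrow> A$i$lastidx = 0}"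
proof -
  have "(\<exists>c::real. A *v axis lastidx 1 = c *\<^sub>R axis lastidx 1) \<longleftrightarrow> (\<forall>i. i \<noteq> lastidx \<longrightarrow> A$i$lastidx = 0)" for A :: "((real,'a) vec,'a) vec"
  proof
    assume "\<exists>c. A *v axis lastidx 1 = c *\<^sub>R axis lastidx 1"
    then obtain c where "A *v axis lastidx 1 = c *\<^sub>R axis lastidx 1" by blast
    then have "\<forall>i. A$i$lastidx = (c *\<^sub>R axis lastidx 1)$i" by (metis col)
    then show "\<forall>i. i \<noteq> lastidx \<longrightarrow> A$i$lastidx = 0" by (simp add: axis_def)
  next
    assume h: "\<forall>i. i \<noteq> lastidx \<longrightarrow> A$i$lastidx = 0"
    show "\<exists>c. A *v axis lastidx 1 = c *\<^sub>R axis lastidx 1"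
      by (rule exI[of _ "A$lastidx$lastidx"]) (unfold vec_eq_iff col, simp add: axis_def h)
  qed
  then show ?thesis by (simp add: sl_h_def)
qed

lemma if_and: "(if P \<and> Q then x else y) = (if P then (if Q then x else y) else y)"
  by simp
lemma sum_if_const: "(\<Sum>b\<in>B. if P then f b else 0) = (if P then (\<Sum>b\<in>B. f b) else 0)"
  by simp
lemma EE_entry: "EE i j $ a $ b = (if a = i \<and> b = j then 1 else 0)"
  by (simp add: EE_def)
lemma mat1_entry: "(mat 1 :: real^'n^'n) $ a $ b = (if a = b then 1 else 0)"
  by (simp add: mat_def)

lemma inner_EE: "EE i j \<bullet> (A::real^'n^'n) = A$i$j"
proof -
  have r: "(\<Sum>b\<in>UNIV. EE i j $ a $ b * A $ a $ b) = (if a = i then A$a$j else 0)" for a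
  proof (cases "a = i")
    case True
    have "(\<Sum>b\<in>UNIV. EE i j $ a $ b * A $ a $ b) = (\<Sum>b\<in>UNIV. if b = j then A $ a $ b else 0)"
      by (rule sum.cong) (auto simp: EE_def True)
    then show ?thesis using True by simp
  qed (simp add: EE_def)
  show ?thesis by (simp add: inner_vec_def r)
qed

lemma inner_mat1: "mat 1 \<bullet> (A::real^'n^'n) = trace A"
proof -
  have r: "(\<Sum>b\<in>UNIV. mat 1 $ a $ b * A $ a $ b) = A$a$a" for a
  proof -
    have "(\<Sum>b\<in>UNIV. mat 1 $ a $ b * A $ a $ b) = (\<Sum>b\<in>UNIV. if a = b then A $ a $ b else 0)"
      by (rule sum.cong) (auto simp: mat_def)
    then show ?thesis by simp
  qed
  show ?thesis by (simp add: inner_vec_def r trace_def)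
qed

lemma dim_sl: "dim (sl :: (real^'n^'n) set) = CARD('n) * CARD('n) - 1"
proof -
  have "(mat 1 :: real^'n^'n) \<noteq> 0"
  proof
    assume "(mat 1 :: real^'n^'n) = 0"
    then have "(mat 1 :: real^'n^'n) $ undefined $ undefined = 0" by simp
    then show False by (simp add: mat_def)
  qed
  then have "dim {x::real^'n^'n. mat 1 \<bullet> x = 0} = DIM(real^'n^'n) - 1" by (rule dim_hyperplane)
  moreover have "{x::real^'n^'n. mat 1 \<bullet> x = 0} = sl" by (simp add: inner_mat1 sl_def)
  ultimately show ?thesis by simp
qed

lemma sl_h_sub: "(sl_h :: ((real, 'a::{finite,linorder}) vec, 'a) vec set) \<subseteq> sl"
  by (auto simp: sl_h_alt)

lemma dim_sl_h: "dim (sl_h :: ((real, 'a::{finite,linorder}) vec, 'a) vec set) = CARD('a) * CARD('a) - CARD('a)"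
proof -
  define n :: 'a where "n = lastidx"
  define S :: "((real, 'a) vec, 'a) vec set" where "S = insert (mat 1) ((\<lambda>i. EE i n) ` {i. i \<noteq> n})"
  have notin: "mat 1 \<notin> (\<lambda>i. EE i n) ` {i. i \<noteq> n}"
  proof
    assume "mat 1 \<in> (\<lambda>i. EE i n) ` {i. i \<noteq> n}"
    then obtain i where "i \<noteq> n" "mat 1 = EE i n" by auto
    then have "(mat 1 :: ((real, 'a) vec, 'a) vec)$i$i = EE i n $i$i" by simp
    with \<open>i \<noteq> n\<close> show False by (simp add: mat_def EE_def)
  qed
  have inj: "inj_on (\<lambda>i. EE i n :: ((real, 'a) vec, 'a) vec) {i. i \<noteq> n}"
  proof (rule inj_onI)
    fix i j assume "EE i n = (EE j n :: ((real, 'a) vec, 'a) vec)"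
    then have "(EE i n :: ((real, 'a) vec, 'a) vec) $ i $ n = EE j n $ i $ n" by simp
    then show "i = j" by (simp add: EE_def split: if_splits)
  qed
  have cardS: "card S = CARD('a)"
  proof -
    have "card {i::'a. i \<noteq> n} = CARD('a) - 1"
    proof -
      have "{i::'a. i \<noteq> n} = UNIV - {n}" by auto
      then show ?thesis by (simp add: card_Diff_singleton)
    qed
    moreover have "CARD('a) \<ge> 1" by (simp add: Suc_leI)
    ultimately show ?thesis unfolding S_def
      using notin inj by (simp add: card_image)
  qed
  have orth: "pairwise orthogonal S"
    unfolding S_def pairwise_def orthogonal_def
    by (auto simp: inner_EE inner_commute[of "mat 1" "EE _ _"] EE_entry mat1_entry)
  have nz: "0 \<notin> S"
  proof
    assume "0 \<in> S"
    then consider "(0::((real, 'a) vec, 'a) vec) = mat 1" | i where "0 = (EE i n :: ((real, 'a) vec, 'a) vec)"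
      unfolding S_def by auto
    then show False
    proof cases
      case 1
      then have "(0::((real, 'a) vec, 'a) vec) $ n $ n = mat 1 $ n $ n" by simp
      then show False by (simp add: mat_def)
    next
      case 2
      then have "(0::((real, 'a) vec, 'a) vec) $ i $ n = EE i n $ i $ n" by simp
      then show False by (simp add: EE_def)
    qed
  qed
  have finS: "finite S" by (simp add: S_def)
  have dimspan: "dim (span S) = CARD('a)"
    using dim_span_eq_card_independent[OF pairwise_orthogonal_independent[OF orth nz]] cardS by simp
  have eq: "{y \<in> UNIV. \<forall>x \<in> span S. orthogonal x y} = sl_h"
  proof (intro set_eqI iffI)
    fix y :: "((real, 'a) vec, 'a) vec" assume "y \<in> {y \<in> UNIV. \<forall>x \<in> span S. orthogonal x y}"
    then have h: "\<forall>x\<in>S. orthogonal x y" using span_base by auto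
    then have "trace y = 0" unfolding S_def orthogonal_def by (simp add: inner_mat1)
    moreover have "\<forall>i. i \<noteq> n \<longrightarrow> y$i$n = 0" using h unfolding S_def orthogonal_def by (simp add: inner_EE)
    ultimately show "y \<in> sl_h" by (simp add: sl_h_alt sl_def n_def)
  next
    fix y :: "((real, 'a) vec, 'a) vec" assume "y \<in> sl_h"
    then have "trace y = 0" "\<forall>i. i \<noteq> n \<longrightarrow> y$i$n = 0" by (auto simp: sl_h_alt sl_def n_def)
    then have h: "\<forall>x\<in>S. orthogonal y x" unfolding S_def orthogonal_def
      by (auto simp: inner_EE inner_mat1 inner_commute[of y])
    show "y \<in> {y \<in> UNIV. \<forall>x \<in> span S. orthogonal x y}"
    proof (simp, intro ballI)
      fix x assume "x \<in> span S"
      then have "orthogonal y x" using orthogonal_to_span[of x S y] h by blast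
      then show "orthogonal x y" by (simp add: orthogonal_commute)
    qed
  qed
  have "dim {y \<in> UNIV. \<forall>x \<in> span S. orthogonal x y} + dim (span S) = dim (UNIV :: ((real, 'a) vec, 'a) vec set)"
    by (rule dim_subspace_orthogonal_to_vectors) auto
  then show ?thesis using eq dimspan by simp
qed

lemma mbr_EE: "mbr (u::real^'n^'n) (EE i j) $ a $ b = (if b = j then u$a$i else 0) - (if a = i then u$j$b else 0)"
  by (simp add: mbr_def mul_EE_r mul_EE_l)

lemma kernel_zero:
  fixes u :: "((real, 'a::{finite,linorder}) vec, 'a) vec"
  assumes u: "u \<in> sl" and k: "\<forall>\<alpha>. \<forall>v\<in>sl. sl_theta \<alpha> u v = 0"
  shows "u = 0"
proof -
  define n :: 'a where "n = lastidx"
  have k': "mbr u (EE i j) $ a $ n = 0" if "i \<noteq> j" for i j a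
  proof -
    have "EE i j \<in> (sl :: ((real, 'a) vec, 'a) vec set)" using that by (simp add: sl_def trace_EE)
    then have "sl_theta a u (EE i j) = 0" using k by blast
    then show ?thesis by (simp add: sl_theta_def n_def)
  qed
  have off: "u$a$b = 0" if "a \<noteq> b" for a b
  proof (cases "b = n")
    case True
    have "mbr u (EE n a) $ n $ n = 0" using k' that True by auto
    then show ?thesis using that True by (simp add: mbr_EE)
  next
    case False
    have "mbr u (EE b n) $ a $ n = 0" using k' False by auto
    then show ?thesis using that False by (simp add: mbr_EE)
  qed
  have diag: "u$b$b = u$n$n" for b
  proof (cases "b = n")
    case False
    have "mbr u (EE b n) $ b $ n = 0" using k' False by auto
    then show ?thesis using False by (simp add: mbr_EE)
  qed simp
  have "trace u = (\<Sum>b\<in>(UNIV::'a set). u$n$n)" unfolding trace_def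
    by (rule sum.cong[OF refl], rule diag)
  then have "trace u = of_nat CARD('a) * u$n$n" by simp
  moreover have "trace u = 0" using u by (simp add: sl_def)
  ultimately have z: "u$n$n = 0" by simp
  have "u$a$b = 0" for a b
  proof (cases "a = b")
    case True
    then show ?thesis using diag[of b] z by simp
  qed (rule off)
  then show ?thesis by (simp add: vec_eq_iff)
qed

theorem mainTheorem10:
  assumes "CARD('n::{finite,linorder}) \<ge> 2"
  shows "k_symplectic (sl :: ((real, 'n) vec, 'n) vec set) mbr CARD('n) sl_h sl_theta (UNIV :: 'n set)"
proof -
  let ?N = "CARD('n)"
  have lie: "is_lie_algebra (sl :: ((real, 'n) vec, 'n) vec set) mbr"
    unfolding is_lie_algebra_def
  proof (intro conjI)
    show "subspace (sl :: ((real, 'n) vec, 'n) vec set)" by (rule subspace_sl)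
    show "\<forall>u\<in>sl. \<forall>v\<in>sl. mbr u v \<in> (sl :: ((real, 'n) vec, 'n) vec set)" by (simp add: sl_def trace_mbr)
    show "\<forall>a. \<forall>u\<in>sl. \<forall>v\<in>sl. \<forall>w\<in>(sl :: ((real, 'n) vec, 'n) vec set). mbr (a *\<^sub>R u + v) w = a *\<^sub>R mbr u w + mbr v w"
      by (simp add: mbr_lin)
    show "\<forall>u\<in>sl. \<forall>v\<in>(sl :: ((real, 'n) vec, 'n) vec set). mbr u v = - mbr v u"
      using mbr_skew by blast
    show "\<forall>u\<in>sl. \<forall>v\<in>sl. \<forall>w\<in>(sl :: ((real, 'n) vec, 'n) vec set). mbr u (mbr v w) + mbr v (mbr w u) + mbr w (mbr u v) = 0"
      using mbr_jacobi by blast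
  qed
  have dims: "\<exists>m::nat. m \<ge> 1 \<and> dim (sl :: ((real, 'n) vec, 'n) vec set) = m * (?N + 1)
      \<and> dim (sl_h :: ((real, 'n) vec, 'n) vec set) = m * ?N"
  proof (intro exI[of _ "?N - 1"] conjI)
    show "?N - 1 \<ge> 1" using assms by simp
    show "dim (sl :: ((real, 'n) vec, 'n) vec set) = (?N - 1) * (?N + 1)"
      using assms by (simp add: dim_sl algebra_simps diff_mult_distrib)
    show "dim (sl_h :: ((real, 'n) vec, 'n) vec set) = (?N - 1) * ?N"
      by (simp add: dim_sl_h diff_mult_distrib)
  qed
  have hz: "mbr u v *v axis lastidx 1 = 0" if hu: "u \<in> sl_h" and hv: "v \<in> sl_h" for u v :: "((real, 'n) vec, 'n) vec"
  proof -
    obtain a b where a: "u *v axis lastidx 1 = a *\<^sub>R axis lastidx 1"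
      and b: "v *v axis lastidx 1 = b *\<^sub>R axis lastidx 1" using hu hv unfolding sl_h_def by blast
    show ?thesis
      by (simp add: mbr_def matrix_vector_mult_diff_rdistrib matrix_vector_mul_assoc[symmetric] a b
           matrix_vector_mult_scaleR)
  qed
  have hsub: "mbr u v \<in> sl_h" if hu: "u \<in> sl_h" and hv: "v \<in> sl_h" for u v :: "((real, 'n) vec, 'n) vec"
  proof -
    have "mbr u v *v axis lastidx 1 = 0 *\<^sub>R axis lastidx 1" using hz[OF hu hv] by simp
    moreover have "mbr u v \<in> sl" by (simp add: sl_def trace_mbr)
    ultimately show ?thesis unfolding sl_h_def by blast
  qed
  have hvan: "sl_theta \<alpha> u v = 0" if hu: "u \<in> sl_h" and hv: "v \<in> sl_h" for u v :: "((real, 'n) vec, 'n) vec" and \<alpha>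
  proof -
    have "(mbr u v *v axis lastidx 1) $ \<alpha> = 0" using hz[OF hu hv] by simp
    then show ?thesis by (simp add: sl_theta_def col)
  qed
  have sub: "lie_subalgebra (sl_h :: ((real, 'n) vec, 'n) vec set) sl mbr"
    unfolding lie_subalgebra_def
  proof (intro conjI ballI)
    show "(sl_h :: ((real, 'n) vec, 'n) vec set) \<subseteq> sl" by (rule sl_h_sub)
    show "subspace (sl_h :: ((real, 'n) vec, 'n) vec set)"
      unfolding subspace_def sl_h_alt sl_def by (auto simp: trace_def sum.distrib sum_distrib_left[symmetric])
  qed (rule hsub)
  have skew: "skew_bilinear_on sl (sl_theta \<alpha>)" for \<alpha> :: 'n
    unfolding skew_bilinear_on_def sl_theta_def
  proof (intro conjI ballI allI)
    fix u v :: "((real, 'n) vec, 'n) vec"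
    show "- (mbr u v $ \<alpha> $ lastidx) = - (- (mbr v u $ \<alpha> $ lastidx))"
      by (subst mbr_skew[of u v]) simp
  qed (simp add: mbr_lin ; simp add: algebra_simps)
  have coc: "is_2cocycle sl mbr (sl_theta \<alpha>)" for \<alpha> :: 'n
  proof -
    have "sl_theta \<alpha> (mbr u v) w + sl_theta \<alpha> (mbr v w) u + sl_theta \<alpha> (mbr w u) v = 0" for u v w :: "((real, 'n) vec, 'n) vec"
    proof -
      have "mbr (mbr u v) w + mbr (mbr v w) u + mbr (mbr w u) v = 0"
        unfolding mbr_skew[of "mbr u v" w] mbr_skew[of "mbr v w" u] mbr_skew[of "mbr w u" v]
      proof -
        have "- (mbr w (mbr u v) + mbr u (mbr v w) + mbr v (mbr w u)) = 0"
          using mbr_jacobi[of w u v] by simp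
        then show "- mbr w (mbr u v) + - mbr u (mbr v w) + - mbr v (mbr w u) = 0"
          by (simp only: minus_add_distrib)
      qed
      then have "(mbr (mbr u v) w + mbr (mbr v w) u + mbr (mbr w u) v) $ \<alpha> $ lastidx = 0" by simp
      then show ?thesis by (simp add: sl_theta_def algebra_simps)
    qed
    then show ?thesis by (simp add: is_2cocycle_def)
  qed
  have ker: "(\<Inter>i\<in>UNIV. form_kernel sl (sl_theta i)) = {0::((real, 'n) vec, 'n) vec}"
  proof
    show "(\<Inter>i\<in>UNIV. form_kernel sl (sl_theta i)) \<subseteq> {0::((real, 'n) vec, 'n) vec}"
      using kernel_zero by (auto simp: form_kernel_def)
    show "{0::((real, 'n) vec, 'n) vec} \<subseteq> (\<Inter>i\<in>UNIV. form_kernel sl (sl_theta i))"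
      by (auto simp: form_kernel_def sl_def trace_def sl_theta_def mbr_def)
  qed
  show ?thesis unfolding k_symplectic_def
  proof (intro conjI)
    show "1 \<le> ?N" using assms by simp
  qed (use lie dims sub skew coc ker hvan in \<open>simp_all\<close>)
qed

end
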